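(* Let $F$ be an infinite field and let $n\geq 2$ be an integer. If $p\in F[x]$ is a nonconstant polynomial, then there exist matrices $A,B\in \mathrm{M}_n(F)$ such that $p(AB)-p(BA)$ is algebraic of degree $n$ over $F$.
   Context: An element $a$ of a ring with center $Z$ is algebraic of degree $n$ over $Z$ if there is a polynomial $f\in Z[x]$ of degree $n$ with $f(a)=0$ and no nonzero polynomial of smaller degree in $Z[x]$ annihilates $a$. *)

theory Defs
  imports "HOL-Analysis.Analysis" "HOL-Computational_Algebra.Polynomial"
begin

primrec matpow :: "'a::semiring_1^'n^'n \<Rightarrow> nat \<Rightarrow> 'a^'n^'n" where
  "matpow A 0 = mat 1"
| "matpow A (Suc k) = A ** matpow A k"

definition poly_mat :: "'a::comm_ring_1 poly \<Rightarrow> 'a^'n^'n \<Rightarrow> 'a^'n^'n" where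
  "poly_mat p A = (\<Sum>i\<le>degree p. mat (coeff p i) ** matpow A i)"

text \<open>A matrix is algebraic of degree d over the center (the scalar matrices,
  identified with the field): some nonzero polynomial of degree d annihilates it,
  and no nonzero polynomial of smaller degree does.\<close>
definition algebraic_of_degree :: "'a::field^'n^'n \<Rightarrow> nat \<Rightarrow> bool" where
  "algebraic_of_degree A d \<longleftrightarrow>
     (\<exists>f::'a poly. f \<noteq> 0 \<and> degree f = d \<and> poly_mat f A = 0) \<and>
     (\<forall>g::'a poly. g \<noteq> 0 \<and> degree g < d \<longrightarrow> poly_mat g A \<noteq> 0)"

end

theory Submission
  imports Defs
begin

lemma mm_entry: "((X::'a::semiring_1^'n^'m) ** (Y::'a^'p^'n)) $ i $ j = (\<Sum>k\<in>UNIV. X$i$k * Y$k$j)"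
  by (simp add: matrix_matrix_mult_def)

lemma mat_entry: "(mat c :: 'a::zero^'n^'n) $ i $ j = (if i = j then c else 0)"
  by (simp add: mat_def)

lemma sum_single:
  fixes f :: "'n::finite \<Rightarrow> 'a::comm_monoid_add"
  assumes "\<And>k. k \<noteq> k0 \<Longrightarrow> f k = 0"
  shows "sum f UNIV = f k0"
proof -
  have "sum f UNIV = f k0 + sum f (UNIV - {k0})"
    by (simp add: sum.remove)
  also have "sum f (UNIV - {k0}) = 0" using assms by (intro sum.neutral) auto
  finally show ?thesis by simp
qed

lemma matrix_add_rdistrib':
  fixes A B :: "'a::semiring_1^'n^'m" and C :: "'a^'p^'n"
  shows "(A + B) ** C = A ** C + B ** C"
  by (simp add: vec_eq_iff mm_entry distrib_right sum.distrib)

lemma mat_comm: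
  fixes X :: "'a::comm_semiring_1^'n^'n"
  shows "mat c ** X = X ** mat c"
proof -
  have "(mat c ** X) $ i $ j = c * X$i$j" for i j
    by (simp add: mm_entry mat_entry if_distrib if_distribR sum.delta cong: if_cong)
  moreover have "(X ** mat c) $ i $ j = c * X$i$j" for i j
    by (simp add: mm_entry mat_entry if_distrib if_distribR sum.delta' mult.commute cong: if_cong)
  ultimately show ?thesis by (simp add: vec_eq_iff)
qed

lemma mm_sum_left:
  fixes f :: "'i \<Rightarrow> 'a::semiring_1^'n^'m" and Y :: "'a^'p^'n"
  shows "(sum f S) ** Y = sum (\<lambda>i. f i ** Y) S"
  by (induction S rule: infinite_finite_induct) (auto simp: matrix_add_rdistrib')

lemma mm_sum_right:
  fixes f :: "'i \<Rightarrow> 'a::semiring_1^'p^'n" and Y :: "'a^'n^'m"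
  shows "Y ** (sum f S) = sum (\<lambda>i. Y ** f i) S"
  by (induction S rule: infinite_finite_induct) (auto simp: matrix_add_ldistrib)

lemma matpow_conj:
  fixes A C X :: "'a::comm_ring_1^'n^'n"
  assumes "A ** C = mat 1" "C ** A = mat 1"
  shows "matpow (C ** X ** A) k = C ** matpow X k ** A"
proof (induction k)
  case 0 then show ?case using assms by simp
next
  case (Suc k)
  have "matpow (C ** X ** A) (Suc k) = (C ** X ** A) ** (C ** matpow X k ** A)"
    using Suc by simp
  also have "\<dots> = C ** X ** (A ** C) ** matpow X k ** A"
    by (simp add: matrix_mul_assoc)
  also have "\<dots> = C ** matpow X (Suc k) ** A"
    using assms by (simp add: matrix_mul_assoc)
  finally show ?case .
qed

lemma poly_mat_conj:
  fixes A C X :: "'a::comm_ring_1^'n^'n"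
  assumes "A ** C = mat 1" "C ** A = mat 1"
  shows "poly_mat p (C ** X ** A) = C ** poly_mat p X ** A"
proof -
  have "mat c ** (C ** Y ** A) = C ** (mat c ** Y) ** A" for c Y
    by (metis mat_comm matrix_mul_assoc)
  then show ?thesis
    unfolding poly_mat_def matpow_conj[OF assms] mm_sum_left mm_sum_right by simp
qed


lemma sum_nonzero_ex:
  assumes "sum f (S::'b set) \<noteq> (0::'a::comm_monoid_add)" shows "\<exists>k\<in>S. f k \<noteq> 0"
proof (rule ccontr)
  assume "\<not> (\<exists>k\<in>S. f k \<noteq> 0)"
  then have "sum f S = 0" by (intro sum.neutral) simp
  with assms show False by simp
qed

lemma matpow_upper_zero:
  fixes U :: "'a::field^'n^'n"
  assumes up: "\<And>i j. U$i$j \<noteq> 0 \<Longrightarrow> r i < (r j::nat)"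
  shows "matpow U k $ a $ b \<noteq> 0 \<Longrightarrow> r a + k \<le> r b"
proof (induction k arbitrary: a b)
  case 0 then show ?case by (auto simp: mat_entry split: if_splits)
next
  case (Suc k)
  then have "(\<Sum>l\<in>UNIV. U$a$l * matpow U k $ l $ b) \<noteq> 0" by (simp add: mm_entry)
  then obtain l where "U$a$l * matpow U k $ l $ b \<noteq> 0" using sum_nonzero_ex by blast
  then have "U$a$l \<noteq> 0" "matpow U k $ l $ b \<noteq> 0" by auto
  then have "r a < r l" "r l + k \<le> r b" using up Suc.IH[of l b] by auto
  then show ?case by simp
qed

lemma matpow_upper_nonzero:
  fixes U :: "'a::field^'n^'n"
  assumes bij: "bij_betw r (UNIV::'n set) {..<CARD('n)}"
    and up: "\<And>i j. U$i$j \<noteq> 0 \<Longrightarrow> r i < r j"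
    and sup: "\<And>i j. r j = Suc (r i) \<Longrightarrow> U$i$j \<noteq> 0"
  shows "r b = r a + k \<Longrightarrow> matpow U k $ a $ b \<noteq> 0"
proof (induction k arbitrary: a b)
  case 0
  have "inj r" using bij by (simp add: bij_betw_def)
  with 0 have "a = b" by (auto dest: injD)
  then show ?case by (simp add: mat_entry)
next
  case (Suc k)
  have rb: "r b < CARD('n)" using bij_betw_apply[OF bij, of b] by simp
  have img: "r ` UNIV = {..<CARD('n)}" using bij by (simp add: bij_betw_def)
  have "Suc (r a) < CARD('n)" using rb Suc.prems by linarith
  then have "Suc (r a) \<in> r ` UNIV" unfolding img by simp
  then obtain l0 where l0: "r l0 = Suc (r a)" by auto
  have "inj r" using bij by (simp add: bij_betw_def)
  have "(\<Sum>l\<in>UNIV. U$a$l * matpow U k $ l $ b) = U$a$l0 * matpow U k $ l0 $ b"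
  proof (rule sum_single)
    fix l assume "l \<noteq> l0"
    show "U$a$l * matpow U k $ l $ b = 0"
    proof (rule ccontr)
      assume "U$a$l * matpow U k $ l $ b \<noteq> 0"
      then have "U$a$l \<noteq> 0" "matpow U k $ l $ b \<noteq> 0" by auto
      then have "r a < r l" "r l + k \<le> r b" using up matpow_upper_zero[of U r k l b, OF up] by auto
      then have "r l = r l0" using l0 Suc.prems by linarith
      with \<open>inj r\<close> \<open>l \<noteq> l0\<close> show False by (auto dest: injD)
    qed
  qed
  moreover have "U$a$l0 \<noteq> 0" using sup l0 by simp
  moreover have "matpow U k $ l0 $ b \<noteq> 0"
  proof (rule Suc.IH)
    show "r b = r l0 + k" using Suc.prems l0 by simp
  qed
  ultimately show ?case by (simp add: mm_entry)
qed


lemma mat_mult_entry: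
  fixes X :: "'a::comm_semiring_1^'n^'n"
  shows "(mat c ** X) $ i $ j = c * X$i$j"
  by (simp add: mm_entry mat_entry if_distrib if_distribR sum.delta cong: if_cong)

lemma sum_single_set:
  assumes "finite S" "k0 \<in> S" "\<And>k. k \<in> S \<Longrightarrow> k \<noteq> k0 \<Longrightarrow> f k = (0::'a::comm_monoid_add)"
  shows "sum f S = f k0"
proof -
  have "sum f S = f k0 + sum f (S - {k0})"
    using assms by (simp add: sum.remove)
  also have "sum f (S - {k0}) = 0" using assms by (intro sum.neutral) auto
  finally show ?thesis by simp
qed

lemma upper_alg:
  fixes U :: "'a::field^'n^'n"
  assumes bij: "bij_betw r (UNIV::'n set) {..<CARD('n)}"
    and up: "\<And>i j. U$i$j \<noteq> 0 \<Longrightarrow> r i < r j"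
    and sup: "\<And>i j. r j = Suc (r i) \<Longrightarrow> U$i$j \<noteq> 0"
  shows "algebraic_of_degree U CARD('n)"
  unfolding algebraic_of_degree_def
proof (intro conjI allI impI)
  define n where "n = CARD('n)"
  have img: "r ` UNIV = {..<n}" using bij by (simp add: bij_betw_def n_def)
  have rlt: "r x < n" for x using img by auto
  have Un: "matpow U n = 0"
  proof (rule ccontr)
    assume "matpow U n \<noteq> 0"
    then obtain a b where "matpow U n $ a $ b \<noteq> 0" by (auto simp: vec_eq_iff)
    then have "r a + n \<le> r b" using matpow_upper_zero[of U r, OF up] by blast
    with rlt[of b] show False by simp
  qed
  have terms: "mat (coeff (monom (1::'a) n) i) ** matpow U i = (if i = n then matpow U n else 0)" for i
    by (auto simp: coeff_monom)
  have "poly_mat (monom (1::'a) n) U = 0"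
    unfolding poly_mat_def terms degree_monom_eq[OF one_neq_zero] using Un by simp
  then show "\<exists>f::'a poly. f \<noteq> 0 \<and> degree f = CARD('n) \<and> poly_mat f U = 0"
    by (intro exI[of _ "monom 1 n"]) (simp add: degree_monom_eq n_def)
next
  fix g :: "'a poly"
  assume g: "g \<noteq> 0 \<and> degree g < CARD('n)"
  define n where "n = CARD('n)"
  have img: "r ` UNIV = {..<n}" using bij by (simp add: bij_betw_def n_def)
  define i0 where "i0 = (LEAST i. coeff g i \<noteq> 0)"
  have "coeff g (degree g) \<noteq> 0" using g by simp
  then have c0: "coeff g i0 \<noteq> 0" unfolding i0_def by (rule LeastI)
  have i0le: "i0 \<le> degree g"
    unfolding i0_def by (rule Least_le) fact
  have below: "coeff g i = 0" if "i < i0" for i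
    using not_less_Least[OF that[unfolded i0_def]] by simp
  have "i0 < n" using i0le g n_def by simp
  then have "0 \<in> r ` UNIV" "i0 \<in> r ` UNIV" unfolding img by auto
  then obtain a b where ra: "r a = 0" and rb: "r b = i0" by (metis imageE)
  have "(poly_mat g U) $ a $ b = (\<Sum>i\<le>degree g. coeff g i * matpow U i $ a $ b)"
    unfolding poly_mat_def by (simp add: mat_mult_entry)
  also have "\<dots> = coeff g i0 * matpow U i0 $ a $ b"
  proof (rule sum_single_set)
    fix i assume "i \<in> {..degree g}" "i \<noteq> i0"
    show "coeff g i * matpow U i $ a $ b = 0"
    proof (cases "i < i0")
      case True then show ?thesis using below by simp
    next
      case False
      then have "i > i0" using \<open>i \<noteq> i0\<close> by simp
      have "matpow U i $ a $ b = 0"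
      proof (rule ccontr)
        assume "matpow U i $ a $ b \<noteq> 0"
        then have "r a + i \<le> r b" using matpow_upper_zero[of U r, OF up] by blast
        with ra rb \<open>i > i0\<close> show False by simp
      qed
      then show ?thesis by simp
    qed
  qed (use i0le in auto)
  also have "\<dots> \<noteq> 0"
    using c0 matpow_upper_nonzero[OF bij up sup, of b a i0] ra rb by simp
  finally show "poly_mat g U \<noteq> 0" by auto
qed


lemma neg1_pow_cancel: "(-1::'a::ring_1)^(Suc m) + (-1)^m = 0"
  by simp

theorem lemma2p8:
  fixes p :: "'a::field poly"
  assumes "infinite (UNIV :: 'a set)"
    and "CARD('n::finite) \<ge> 2"
    and "degree p \<ge> 1"
  shows "\<exists>A B :: 'a^'n^'n.
           algebraic_of_degree (poly_mat p (A ** B) - poly_mat p (B ** A)) CARD('n)"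
proof -
  define n where "n = CARD('n)"
  obtain r :: "'n \<Rightarrow> nat" where bij: "bij_betw r UNIV {..<CARD('n)}"
    using ex_bij_betw_finite_nat[of "UNIV::'n set"] by (auto simp: atLeast0LessThan)
  have img: "r ` UNIV = {..<n}" using bij by (simp add: bij_betw_def n_def)
  have rlt: "r x < n" for x using img by auto
  have "inj r" using bij by (simp add: bij_betw_def)
  then have rinj: "r i = r j \<longleftrightarrow> i = j" for i j by (auto dest: injD)
  have pred: "\<exists>k. r k = m" if "r j = Suc m" for j m
  proof -
    have "m \<in> r ` UNIV" unfolding img using rlt[of j] that by simp
    then show ?thesis by auto
  qed
  have succ: "\<exists>k. r k = Suc (r i)" if "r i < r j" for i j
  proof -
    have "Suc (r i) \<in> r ` UNIV" unfolding img using rlt[of j] that by simp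
    then show ?thesis by auto
  qed
  define q where "q = p - [:poly p 0:]"
  have "q \<noteq> 0"
  proof
    assume "q = 0"
    then have "p = [:poly p 0:]" by (simp add: q_def)
    then have "degree p = 0" by (metis degree_pCons_0)
    with assms(3) show False by simp
  qed
  then have "finite {y. poly q y = 0}" by (rule poly_roots_finite)
  with assms(1) obtain x where "poly q x \<noteq> 0"
    by (metis (mono_tags, lifting) ex_new_if_finite mem_Collect_eq)
  then have px: "poly p x \<noteq> poly p 0" by (simp add: q_def)
  define d where "d j = (if even (r j) then x else 0)" for j
  define e where "e j = poly p (d j)" for j
  have e_ne: "e i \<noteq> e j" if "r j = Suc (r i)" for i j
    using that px by (auto simp: e_def d_def)
  define Dg :: "'a^'n^'n" where "Dg = (\<chi> i j. if i = j then d i else 0)"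
  define E :: "'a^'n^'n" where "E = (\<chi> i j. if i = j then e i else 0)"
  define N :: "'a^'n^'n" where "N = (\<chi> i j. if r j = Suc (r i) then 1 else 0)"
  define C :: "'a^'n^'n" where "C = (\<chi> i j. if r i \<le> r j then (-1)^(r j - r i) else 0)"
  define A where "A = mat 1 + N"
  define B where "B = C ** Dg"
  have NY1: "(N ** Y) $ i $ j = Y $ k $ j" if "r k = Suc (r i)" for Y :: "'a^'n^'n" and i j k
  proof -
    have "(N ** Y) $ i $ j = (\<Sum>l\<in>UNIV. N$i$l * Y$l$j)" by (rule mm_entry)
    also have "\<dots> = N$i$k * Y$k$j"
    proof (rule sum_single)
      fix l assume "l \<noteq> k"
      then have "r l \<noteq> r k" using rinj by simp
      then show "N$i$l * Y$l$j = 0" using that by (simp add: N_def)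
    qed
    finally show ?thesis using that by (simp add: N_def)
  qed
  have NY0: "(N ** Y) $ i $ j = 0" if "\<And>k. r k \<noteq> Suc (r i)" for Y :: "'a^'n^'n" and i j
    unfolding mm_entry by (rule sum.neutral) (use that in \<open>auto simp: N_def\<close>)
  have YN1: "(Y ** N) $ i $ j = Y $ i $ k" if "r j = Suc (r k)" for Y :: "'a^'n^'n" and i j k
  proof -
    have "(Y ** N) $ i $ j = (\<Sum>l\<in>UNIV. Y$i$l * N$l$j)" by (rule mm_entry)
    also have "\<dots> = Y$i$k * N$k$j"
    proof (rule sum_single)
      fix l assume "l \<noteq> k"
      then have "r l \<noteq> r k" using rinj by simp
      then show "Y$i$l * N$l$j = 0" using that by (simp add: N_def)
    qed
    finally show ?thesis using that by (simp add: N_def)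
  qed
  have YN0: "(Y ** N) $ i $ j = 0" if "r j = 0" for Y :: "'a^'n^'n" and i j
    unfolding mm_entry by (rule sum.neutral) (use that in \<open>auto simp: N_def\<close>)
  have AC: "A ** C = mat 1"
  proof -
    have "(A ** C) $ i $ j = mat 1 $ i $ j" for i j
    proof -
      have "(A ** C) $ i $ j = C $ i $ j + (N ** C) $ i $ j"
        by (simp add: A_def matrix_add_rdistrib')
      also have "\<dots> = mat 1 $ i $ j"
      proof (cases "\<exists>k. r k = Suc (r i)")
        case True
        then obtain k where k: "r k = Suc (r i)" by auto
        have "C $ i $ j + (N ** C) $ i $ j = C $ i $ j + C $ k $ j" using NY1[OF k] by simp
        also have "\<dots> = mat 1 $ i $ j"
        proof (cases "r i < r j")
          case True
          then have "r j - r i = Suc (r j - r k)" "r k \<le> r j" using k by auto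
          then show ?thesis using True neg1_pow_cancel[of "r j - r k"]
            by (auto simp: C_def mat_entry)
        next
          case False
          then show ?thesis using k rinj[of i j] by (auto simp: C_def mat_entry)
        qed
        finally show ?thesis .
      next
        case False
        then have "\<not> r i < r j" using succ by blast
        then show ?thesis using NY0[of i C j] False rinj[of i j] by (auto simp: C_def mat_entry)
      qed
      finally show ?thesis .
    qed
    then show ?thesis by (simp add: vec_eq_iff)
  qed
  have CA: "C ** A = mat 1"
  proof -
    have "(C ** A) $ i $ j = mat 1 $ i $ j" for i j
    proof -
      have "(C ** A) $ i $ j = C $ i $ j + (C ** N) $ i $ j"
        by (simp add: A_def matrix_add_ldistrib)
      also have "\<dots> = mat 1 $ i $ j"
      proof (cases "r j")
        case 0
        then show ?thesis using YN0[of j C i] rinj[of i j] by (auto simp: C_def mat_entry)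
      next
        case (Suc m)
        then obtain k where k: "r j = Suc (r k)" using pred by metis
        have "C $ i $ j + (C ** N) $ i $ j = C $ i $ j + C $ i $ k" using YN1[OF k] by simp
        also have "\<dots> = mat 1 $ i $ j"
        proof (cases "r i \<le> r k")
          case True
          then have "r j - r i = Suc (r k - r i)" using k by auto
          then show ?thesis using True k neg1_pow_cancel[of "r k - r i"] rinj[of i j]
            by (auto simp: C_def mat_entry)
        next
          case False
          then show ?thesis using k rinj[of i j] by (auto simp: C_def mat_entry)
        qed
        finally show ?thesis .
      qed
      finally show ?thesis .
    qed
    then show ?thesis by (simp add: vec_eq_iff)
  qed
  have AB: "A ** B = Dg" unfolding B_def by (simp add: matrix_mul_assoc AC)
  have BA: "B ** A = C ** Dg ** A" unfolding B_def ..
  have powD: "matpow Dg k = (\<chi> i j. if i = j then d i ^ k else 0)" for k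
  proof (induction k)
    case 0 then show ?case by (simp add: vec_eq_iff mat_entry)
  next
    case (Suc k)
    have "(Dg ** matpow Dg k) $ i $ j = (if i = j then d i ^ Suc k else 0)" for i j
    proof -
      have "(Dg ** matpow Dg k) $ i $ j = (\<Sum>l\<in>UNIV. Dg$i$l * matpow Dg k $l$j)" by (rule mm_entry)
      also have "\<dots> = Dg$i$i * matpow Dg k $i$j"
        by (rule sum_single) (simp add: Dg_def)
      finally show ?thesis using Suc by (simp add: Dg_def)
    qed
    then show ?case by (simp add: vec_eq_iff)
  qed
  have pD: "poly_mat p Dg = E"
  proof -
    have "poly_mat p Dg $ i $ j = E $ i $ j" for i j
      unfolding poly_mat_def by (simp add: mat_mult_entry powD E_def e_def poly_altdef)
    then show ?thesis by (simp add: vec_eq_iff)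
  qed
  define M where "M = E - C ** E ** A"
  have pM: "poly_mat p (A ** B) - poly_mat p (B ** A) = M"
    unfolding AB BA poly_mat_conj[OF AC CA] pD M_def ..
  have CE: "(C ** E) $ i $ j = C $ i $ j * e j" for i j
  proof -
    have "(C ** E) $ i $ j = (\<Sum>l\<in>UNIV. C$i$l * E$l$j)" by (rule mm_entry)
    also have "\<dots> = C$i$j * E$j$j"
      by (rule sum_single) (simp add: E_def)
    finally show ?thesis by (simp add: E_def)
  qed
  have Mentry: "M $ i $ j = E $ i $ j - C $ i $ j * e j - (C ** E ** N) $ i $ j" for i j
    by (simp add: M_def A_def matrix_add_ldistrib CE)
  have up: "r i < r j" if "M $ i $ j \<noteq> 0" for i j
  proof (rule ccontr)
    assume nlt: "\<not> r i < r j"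
    have z: "(C ** E ** N) $ i $ j = 0"
    proof (cases "r j")
      case 0 then show ?thesis by (rule YN0)
    next
      case (Suc m)
      then obtain k where k: "r j = Suc (r k)" using pred by metis
      have "(C ** E ** N) $ i $ j = C $ i $ k * e k" using YN1[OF k] CE by simp
      also have "\<dots> = 0" using nlt k by (simp add: C_def)
      finally show ?thesis .
    qed
    have "M $ i $ j = 0" using nlt rinj[of i j] unfolding Mentry z by (auto simp: E_def C_def)
    with that show False by simp
  qed
  have sup: "M $ i $ j \<noteq> 0" if "r j = Suc (r i)" for i j
  proof -
    have "(C ** E ** N) $ i $ j = C $ i $ i * e i" using YN1[OF that] CE by simp
    also have "\<dots> = e i" by (simp add: C_def)
    finally have "(C ** E ** N) $ i $ j = e i" .
    moreover have "i \<noteq> j" using that by auto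
    ultimately have "M $ i $ j = e j - e i" unfolding Mentry using that by (simp add: E_def C_def)
    then show ?thesis using e_ne[OF that] by simp
  qed
  have "algebraic_of_degree M CARD('n)" by (rule upper_alg[OF bij up sup])
  then show ?thesis using pM by metis
qed

end
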